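(* Let $G=(V,E)$ be a connected undirected graph on $V=\{1,\dots,m\}$ without self-loops, with adjacency matrix $H$ ($h^i_j=1$ if $(i,j)\in E$, else $0$), Laplacian $\mathcal{L}=\Delta-H$ ($\Delta$ the diagonal degree matrix) and maximum degree $\Delta_{\max}$. Fix $0<c<1/\Delta_{\max}$ and let the priority vectors $w^i(k)=(w^i_1(k),\dots,w^i_m(k))$, $i=1,\dots,m$, evolve by $$w^i(k+1)=w^i(k)+c\sum_{j=1}^m h^i_j\,(w^j(k)-w^i(k)),$$ where each initial vector $w^i(0)$ has entries in $(0,1)$ summing to $1$. Define for every $k\ge 0$ the weights $a^i_j(k)=w^i_j(k)$ if $(i,j)\in E$; $a^i_i(k)=w^i_i(k)+\sum_{j\neq i,\,(i,j)\notin E} w^i_j(k)$; and $a^i_j(k)=0$ if $j\neq i$ and $(i,j)\notin E$. Let $\mu_0=\min_{i,j\in\{1,\dots,m\}} w^i_j(0)$. Then: (1) $a^i_i(k)\ge \mu_0$ for all $k\ge 0$ and all $i$; (2) $a^i_j(k)\ge \mu_0$ for all $k\ge 0$ and all $(i,j)\in E$; (3) $a^i_j(k)=0$ for all $k$ whenever $j\neq i$ and $(i,j)\notin E$.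
   Context: Agent $i$'s priority vector $w^i(k)$ assigns a priority $w^i_j(k)$ to the objective of every agent $j$. At the network level, $W(k+1)=(I-c\mathcal{L})W(k)$ where $W(k)$ is the matrix whose $i$-th row is $w^i(k)$. The weight $a^i_j(k)$ is the weight agent $i$ assigns to information from agent $j$ at iteration $k$: agent $i$ keeps its priority for neighbors, puts zero weight on non-neighbors, and adds the priorities of non-neighbors to its own self-weight. By convention $(i,i)\notin E$. *)

theory Defs
  imports Complex_Main
begin

definition undirected_graph :: "nat \<Rightarrow> (nat \<Rightarrow> nat \<Rightarrow> bool) \<Rightarrow> bool" where
  "undirected_graph m E \<longleftrightarrow>
     (\<forall>i j. E i j \<longrightarrow> i \<in> {1..m} \<and> j \<in> {1..m}) \<and>
     (\<forall>i j. E i j \<longrightarrow> E j i) \<and> (\<forall>i. \<not> E i i)"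

definition connected_graph :: "nat \<Rightarrow> (nat \<Rightarrow> nat \<Rightarrow> bool) \<Rightarrow> bool" where
  "connected_graph m E \<longleftrightarrow> (\<forall>i\<in>{1..m}. \<forall>j\<in>{1..m}. E\<^sup>*\<^sup>* i j)"

definition adj :: "(nat \<Rightarrow> nat \<Rightarrow> bool) \<Rightarrow> nat \<Rightarrow> nat \<Rightarrow> real" where
  "adj E i j = (if E i j then 1 else 0)"

definition degree :: "nat \<Rightarrow> (nat \<Rightarrow> nat \<Rightarrow> bool) \<Rightarrow> nat \<Rightarrow> nat" where
  "degree m E i = card {j\<in>{1..m}. E i j}"

definition max_degree :: "nat \<Rightarrow> (nat \<Rightarrow> nat \<Rightarrow> bool) \<Rightarrow> nat" where
  "max_degree m E = Max (degree m E ` {1..m})"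

fun prio :: "nat \<Rightarrow> (nat \<Rightarrow> nat \<Rightarrow> bool) \<Rightarrow> real \<Rightarrow> (nat \<Rightarrow> nat \<Rightarrow> real)
              \<Rightarrow> nat \<Rightarrow> nat \<Rightarrow> nat \<Rightarrow> real" where
  "prio m E c W0 0 i l = W0 i l"
| "prio m E c W0 (Suc k) i l =
     prio m E c W0 k i l + c * (\<Sum>j=1..m. adj E i j * (prio m E c W0 k j l - prio m E c W0 k i l))"

definition weight :: "nat \<Rightarrow> (nat \<Rightarrow> nat \<Rightarrow> bool) \<Rightarrow> real \<Rightarrow> (nat \<Rightarrow> nat \<Rightarrow> real)
              \<Rightarrow> nat \<Rightarrow> nat \<Rightarrow> nat \<Rightarrow> real" where
  "weight m E c W0 k i j =
     (if E i j then prio m E c W0 k i j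
      else if j = i then prio m E c W0 k i i +
              (\<Sum>l\<in>{l\<in>{1..m}. l \<noteq> i \<and> \<not> E i l}. prio m E c W0 k i l)
      else 0)"

end

theory Submission
  imports Defs
begin

lemma adj_sum: "(\<Sum>j=1..m. adj E i j) = real (degree m E i)"
  unfolding adj_def degree_def
  by (simp add: sum.If_cases Int_def conj_commute)

lemma prio_lb:
  assumes cpos: "0 < c" and cd: "\<forall>i\<in>{1..m}. c * real (degree m E i) \<le> 1"
    and base: "\<forall>i\<in>{1..m}. W0 i l \<ge> \<mu>"
  shows "\<forall>i\<in>{1..m}. prio m E c W0 k i l \<ge> \<mu>"
proof (induction k)
  case 0
  then show ?case using base by simp
next
  case (Suc k)
  show ?case
  proof
    fix i assume i: "i \<in> {1..m}"
    let ?x = "\<lambda>j. prio m E c W0 k j l"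
    have "(\<Sum>j=1..m. adj E i j * (?x j - ?x i)) \<ge> (\<Sum>j=1..m. adj E i j * (\<mu> - ?x i))"
      apply (rule sum_mono)
      using Suc.IH by (auto simp: adj_def)
    also have "(\<Sum>j=1..m. adj E i j * (\<mu> - ?x i)) = real (degree m E i) * (\<mu> - ?x i)"
      by (simp only: sum_distrib_right[symmetric] adj_sum)
    finally have s: "(\<Sum>j=1..m. adj E i j * (?x j - ?x i)) \<ge> real (degree m E i) * (\<mu> - ?x i)" .
    have xi: "?x i \<ge> \<mu>" using Suc.IH i by blast
    have cdi: "c * real (degree m E i) \<le> 1" using cd i by blast
    have "?x i + c * (real (degree m E i) * (\<mu> - ?x i)) \<ge> \<mu>"
    proof -
      have "(1 - c * real (degree m E i)) * (?x i - \<mu>) \<ge> 0"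
        using cdi xi by simp
      then show ?thesis by (simp add: algebra_simps)
    qed
    moreover have "c * (\<Sum>j=1..m. adj E i j * (?x j - ?x i)) \<ge> c * (real (degree m E i) * (\<mu> - ?x i))"
      using s cpos by (simp add: mult_left_mono)
    ultimately show "prio m E c W0 (Suc k) i l \<ge> \<mu>" by simp
  qed
qed

theorem lemma3p1:
  fixes m :: nat and E :: "nat \<Rightarrow> nat \<Rightarrow> bool" and c :: real
    and W0 :: "nat \<Rightarrow> nat \<Rightarrow> real"
  assumes "m \<ge> 1"
    and "undirected_graph m E"
    and "connected_graph m E"
    and "0 < c" and "c < 1 / real (max_degree m E)"
    and "\<forall>i\<in>{1..m}. \<forall>j\<in>{1..m}. 0 < W0 i j \<and> W0 i j < 1"
    and "\<forall>i\<in>{1..m}. (\<Sum>j=1..m. W0 i j) = 1"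
  defines "\<mu>0 \<equiv> Min {W0 i j | i j. i \<in> {1..m} \<and> j \<in> {1..m}}"
  shows "(\<forall>k. \<forall>i\<in>{1..m}. weight m E c W0 k i i \<ge> \<mu>0)
       \<and> (\<forall>k. \<forall>i j. E i j \<longrightarrow> weight m E c W0 k i j \<ge> \<mu>0)
       \<and> (\<forall>k. \<forall>i\<in>{1..m}. \<forall>j\<in>{1..m}. j \<noteq> i \<and> \<not> E i j \<longrightarrow> weight m E c W0 k i j = 0)"
proof -
  have fin: "finite {W0 i j | i j. i \<in> {1..m} \<and> j \<in> {1..m}}"
  proof -
    have "{W0 i j | i j. i \<in> {1..m} \<and> j \<in> {1..m}} = (\<lambda>(i,j). W0 i j) ` ({1..m}\<times>{1..m})"
      by force
    then show ?thesis by simp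
  qed
  have mu: "\<forall>i\<in>{1..m}. \<forall>j\<in>{1..m}. W0 i j \<ge> \<mu>0"
  proof (intro ballI)
    fix i j assume "i \<in> {1..m}" "j \<in> {1..m}"
    then have "W0 i j \<in> {W0 i j | i j. i \<in> {1..m} \<and> j \<in> {1..m}}" by blast
    then show "W0 i j \<ge> \<mu>0" unfolding \<mu>0_def using fin by (rule Min_le[rotated])
  qed
  have mdpos: "real (max_degree m E) > 0"
  proof (rule ccontr)
    assume "\<not> ?thesis" then have "real (max_degree m E) = 0" by simp
    then show False using assms(4,5) by simp
  qed
  have cd: "\<forall>i\<in>{1..m}. c * real (degree m E i) \<le> 1"
  proof
    fix i assume i: "i \<in> {1..m}"
    have "degree m E i \<le> max_degree m E"
      unfolding max_degree_def using i by (auto intro!: Max_ge)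
    then have "c * real (degree m E i) \<le> c * real (max_degree m E)"
      using assms(4) by (simp add: mult_left_mono)
    also have "\<dots> < 1" using assms(5) mdpos by (simp add: field_simps)
    finally show "c * real (degree m E i) \<le> 1" by simp
  qed
  have P: "\<And>k i l. i \<in> {1..m} \<Longrightarrow> l \<in> {1..m} \<Longrightarrow> prio m E c W0 k i l \<ge> \<mu>0"
    using prio_lb[OF assms(4) cd] mu by blast
  have Pnn: "\<And>k i l. i \<in> {1..m} \<Longrightarrow> l \<in> {1..m} \<Longrightarrow> prio m E c W0 k i l \<ge> 0"
  proof -
    fix k i l assume "i \<in> {1..m}" "l \<in> {1..m}"
    moreover have "\<mu>0 \<ge> 0"
    proof -
      have ne: "{W0 i j | i j. i \<in> {1..m} \<and> j \<in> {1..m}} \<noteq> {}" using assms(1) by auto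
      have "\<mu>0 \<in> {W0 i j | i j. i \<in> {1..m} \<and> j \<in> {1..m}}"
        unfolding \<mu>0_def using Min_in[OF fin ne] .
      then obtain a b where "\<mu>0 = W0 a b" "a \<in> {1..m}" "b \<in> {1..m}" by blast
      then show ?thesis using assms(6) by (metis less_eq_real_def)
    qed
    ultimately show "prio m E c W0 k i l \<ge> 0" using P[of i l k] by linarith
  qed
  have irr: "\<And>i. \<not> E i i" and rng: "\<And>i j. E i j \<Longrightarrow> i \<in> {1..m} \<and> j \<in> {1..m}"
    using assms(2) unfolding undirected_graph_def by blast+
  have A: "\<forall>k. \<forall>i\<in>{1..m}. weight m E c W0 k i i \<ge> \<mu>0"
  proof (intro allI ballI)
    fix k i assume i: "i \<in> {1..m}"
    have "(\<Sum>l\<in>{l\<in>{1..m}. l \<noteq> i \<and> \<not> E i l}. prio m E c W0 k i l) \<ge> 0"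
      using Pnn i by (intro sum_nonneg) auto
    then show "weight m E c W0 k i i \<ge> \<mu>0"
      unfolding weight_def using irr[of i] P[OF i i, of k] by simp
  qed
  have B: "\<forall>k. \<forall>i j. E i j \<longrightarrow> weight m E c W0 k i j \<ge> \<mu>0"
    unfolding weight_def using P rng by auto
  have C: "\<forall>k. \<forall>i\<in>{1..m}. \<forall>j\<in>{1..m}. j \<noteq> i \<and> \<not> E i j \<longrightarrow> weight m E c W0 k i j = 0"
    unfolding weight_def by auto
  show ?thesis using A B C by blast
qed

end
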